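(* Let $K\subset\mathbb{R}^m$ be a pointed, closed, convex cone with nonempty interior which is finitely generated, let $C\subset\mathbb{R}^m$ be a finite set with $0\notin C$ and $K^*=\operatorname{cone}(\operatorname{conv}(C))$, and let $F:\mathbb{R}^n\to\mathbb{R}^m$ be continuously differentiable. Define $h(x,d)=\max\{\langle JF(x)d,w\rangle : w\in C\}$ and $v(x)=\arg\min_{d}\{h(x,d)+\tfrac12\|d\|^2\}$. Fix $0<\rho<\sigma<1$, $\mu>2$, and $e\in\operatorname{int}(K)$ with $\langle w,e\rangle\le1$ for all $w\in C$. Let $x^0\in\mathbb{R}^n$ and assume: (A1) there is an open set $\Lambda$ containing $\mathcal{L}=\{x: F(x)\preceq_K F(x^0)\}$ such that $\|JF(x)-JF(y)\|\le L\|x-y\|$ for all $x,y\in\Lambda$; (A2) every sequence $\{D_k\}\subset F(\mathcal{L})$ with $D_{k+1}\preceq_K D_k$ for all $k$ admits $D\in\mathbb{R}^m$ with $D\preceq_K D_k$ for all $k$. Let $\{x^k\}$ be an infinite sequence generated as follows: $d^0=v(x^0)$; for $k\ge1$, $d^k=v(x^k)+\beta_k d^{k-1}$ with $$\beta_k=\frac{-h(x^k,v(x^k))\big(|h(x^{k-1},v(x^k))|+h(x^{k-1},v(x^k))\big)}{\max\big\{\mu|h(x^k,d^{k-1})h(x^{k-1},v(x^k))|,\ -\mu h(x^{k-1},v(x^{k-1}))|h(x^{k-1},v(x^k))|\big\}};$$ $x^{k+1}=x^k+\alpha_kd^k$, where $\alpha_k>0$ satisfies the standard Wolfe conditions $$F(x^k+\alpha_kd^k)\preceq_K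 F(x^k)+\rho\alpha_k h(x^k,d^k)e,\qquad h(x^k+\alpha_kd^k,d^k)\ge\sigma h(x^k,d^k).$$ Then $$\sum_{k\ge0}\frac{h^2(x^k,d^k)}{\|d^k\|^2}<\infty.$$
   Context: $u\preceq_K v$ means $v-u\in K$. $K^*$ is the positive polar cone of $K$ and $JF$ the Jacobian of $F$. The sequence is assumed infinite, i.e. $v(x^k)\neq0$ for all $k$ (equivalently no $x^k$ is a $K$-Pareto critical point). *)

theory Defs
  imports "HOL-Analysis.Analysis"
begin

definition cone_le :: "'a::real_vector set \<Rightarrow> 'a \<Rightarrow> 'a \<Rightarrow> bool" where
  "cone_le K u v \<longleftrightarrow> v - u \<in> K"

definition dual_cone :: "'a::real_inner set \<Rightarrow> 'a set" where
  "dual_cone K = {w. \<forall>k\<in>K. 0 \<le> inner w k}"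

definition pointed :: "'a::real_vector set \<Rightarrow> bool" where
  "pointed K \<longleftrightarrow> K \<inter> uminus ` K = {0}"

definition finitely_generated_cone :: "'a::real_vector set \<Rightarrow> bool" where
  "finitely_generated_cone K \<longleftrightarrow> (\<exists>S. finite S \<and> K = cone hull (convex hull S))"

text \<open>h(x,d) = max { <JF(x) d, w> : w \<in> C }, with J x the Jacobian (derivative) of F at x.\<close>
definition hfun :: "('n::euclidean_space \<Rightarrow> ('n \<Rightarrow>\<^sub>L 'm::euclidean_space)) \<Rightarrow> 'm set \<Rightarrow> 'n \<Rightarrow> 'n \<Rightarrow> real" where
  "hfun J C x d = Max ((\<lambda>w. inner (blinfun_apply (J x) d) w) ` C)"

text \<open>v(x) = argmin_d { h(x,d) + 1/2 ||d||^2 } (unique minimizer, strongly convex objective).\<close>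
definition vfun :: "('n::euclidean_space \<Rightarrow> ('n \<Rightarrow>\<^sub>L 'm::euclidean_space)) \<Rightarrow> 'm set \<Rightarrow> 'n \<Rightarrow> 'n" where
  "vfun J C x = (THE d. \<forall>d'. hfun J C x d + (1/2) * (norm d)^2 \<le> hfun J C x d' + (1/2) * (norm d')^2)"

text \<open>The conjugate parameter beta_k, with xk = x^k, xp = x^{k-1}, dp = d^{k-1}.\<close>
definition betak :: "('n::euclidean_space \<Rightarrow> ('n \<Rightarrow>\<^sub>L 'm::euclidean_space)) \<Rightarrow> 'm set \<Rightarrow> real \<Rightarrow> 'n \<Rightarrow> 'n \<Rightarrow> 'n \<Rightarrow> real" where
  "betak J C \<mu> xk xp dp =
     (let vk = vfun J C xk; vp = vfun J C xp; hpv = hfun J C xp vk in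
      (- hfun J C xk vk * (\<bar>hpv\<bar> + hpv)) /
      max (\<mu> * \<bar>hfun J C xk dp * hpv\<bar>) (- \<mu> * hfun J C xp vp * \<bar>hpv\<bar>))"

end

theory Submission
  imports Defs
begin

lemma hfun_ge: "finite C \<Longrightarrow> w \<in> C \<Longrightarrow> inner (blinfun_apply (J x) d) w \<le> hfun J C x d"
  unfolding hfun_def by (rule Max_ge) auto

lemma hfun_obtain: "finite C \<Longrightarrow> C \<noteq> {} \<Longrightarrow> \<exists>w\<in>C. hfun J C x d = inner (blinfun_apply (J x) d) w"
proof -
  assume a: "finite C" "C \<noteq> {}"
  have "Max ((\<lambda>w. inner (blinfun_apply (J x) d) w) ` C) \<in> (\<lambda>w. inner (blinfun_apply (J x) d) w) ` C"
    by (rule Max_in) (use a in auto)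
  then show ?thesis unfolding hfun_def by blast
qed

lemma normW: "finite C \<Longrightarrow> w \<in> C \<Longrightarrow> norm w \<le> Max (norm ` C)"
  by (rule Max_ge) auto

lemma hfun_add: assumes "finite C" "C \<noteq> {}"
  shows "hfun J C x (a + b) \<le> hfun J C x a + hfun J C x b"
proof -
  obtain w where w: "w \<in> C" "hfun J C x (a+b) = inner (blinfun_apply (J x) (a+b)) w"
    using hfun_obtain[OF assms] by blast
  have "inner (blinfun_apply (J x) (a+b)) w = inner (blinfun_apply (J x) a) w + inner (blinfun_apply (J x) b) w"
    by (simp add: blinfun.add_right inner_add_left)
  with w hfun_ge[OF assms(1) w(1), of J x a] hfun_ge[OF assms(1) w(1), of J x b] show ?thesis by linarith
qed

lemma hfun_scale: assumes "finite C" "C \<noteq> {}" "t \<ge> 0"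
  shows "hfun J C x (t *\<^sub>R a) \<le> t * hfun J C x a"
proof -
  obtain w where w: "w \<in> C" "hfun J C x (t *\<^sub>R a) = inner (blinfun_apply (J x) (t *\<^sub>R a)) w"
    using hfun_obtain[OF assms(1,2)] by blast
  have "inner (blinfun_apply (J x) (t *\<^sub>R a)) w = t * inner (blinfun_apply (J x) a) w"
    by (simp add: blinfun.scaleR_right)
  with w hfun_ge[OF assms(1) w(1), of J x a] assms(3) show ?thesis
    by (simp add: mult_left_mono)
qed

lemma hfun_zero: assumes "finite C" "C \<noteq> {}" shows "hfun J C x 0 = 0"
  using hfun_obtain[OF assms, of J x 0] by auto

lemma hfun_lower: assumes "finite C" "C \<noteq> {}"
  shows "hfun J C x d \<ge> - (norm (J x) * Max (norm ` C)) * norm d"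
proof -
  obtain w where w: "w \<in> C" using assms by blast
  have "- (norm (J x) * Max (norm ` C)) * norm d \<le> - (norm (blinfun_apply (J x) d) * norm w)"
  proof -
    have "norm (blinfun_apply (J x) d) \<le> norm (J x) * norm d" by (rule norm_blinfun)
    moreover have "norm w \<le> Max (norm ` C)" using normW[OF assms(1) w] .
    ultimately have "norm (blinfun_apply (J x) d) * norm w \<le> (norm (J x) * norm d) * Max (norm ` C)"
      by (simp add: mult_mono)
    then show ?thesis by (simp add: algebra_simps)
  qed
  also have "\<dots> \<le> inner (blinfun_apply (J x) d) w"
    using norm_cauchy_schwarz[of "- blinfun_apply (J x) d" w] by simp
  also have "\<dots> \<le> hfun J C x d" using hfun_ge[OF assms(1) w] .
  finally show ?thesis .
qed

lemma hfun_lip_d: assumes "finite C" "C \<noteq> {}"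
  shows "hfun J C x a \<le> hfun J C x b + norm (J x) * Max (norm ` C) * norm (a - b)"
proof -
  obtain w where w: "w \<in> C" "hfun J C x a = inner (blinfun_apply (J x) a) w"
    using hfun_obtain[OF assms] by blast
  have e: "inner (blinfun_apply (J x) a) w = inner (blinfun_apply (J x) b) w + inner (blinfun_apply (J x) (a - b)) w"
    by (simp add: blinfun.diff_right inner_diff_left)
  have "inner (blinfun_apply (J x) (a - b)) w \<le> norm (blinfun_apply (J x) (a - b)) * norm w"
    using norm_cauchy_schwarz by blast
  also have "\<dots> \<le> (norm (J x) * norm (a - b)) * Max (norm ` C)"
    by (rule mult_mono) (auto simp: norm_blinfun normW[OF assms(1) w(1)])
  finally show ?thesis using e w hfun_ge[OF assms(1) w(1), of J x b] by (simp add: algebra_simps)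
qed

lemma hfun_lip_x: assumes "finite C" "C \<noteq> {}"
  shows "hfun J C y d \<le> hfun J C x d + norm (J y - J x) * Max (norm ` C) * norm d"
proof -
  obtain w where w: "w \<in> C" "hfun J C y d = inner (blinfun_apply (J y) d) w"
    using hfun_obtain[OF assms] by blast
  have e: "inner (blinfun_apply (J y) d) w = inner (blinfun_apply (J x) d) w + inner (blinfun_apply (J y - J x) d) w"
    by (simp add: blinfun.diff_left inner_diff_left)
  have "inner (blinfun_apply (J y - J x) d) w \<le> norm (blinfun_apply (J y - J x) d) * norm w"
    using norm_cauchy_schwarz by blast
  also have "\<dots> \<le> (norm (J y - J x) * norm d) * Max (norm ` C)"
    by (rule mult_mono) (auto simp: norm_blinfun normW[OF assms(1) w(1)])
  finally show ?thesis using e w hfun_ge[OF assms(1) w(1), of J x d] by (simp add: algebra_simps)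
qed

lemma vfun_empty: "vfun J {} x = 0"
  unfolding vfun_def
proof (rule the_equality)
  fix d assume "\<forall>d'. hfun J {} x d + 1 / 2 * (norm d)\<^sup>2 \<le> hfun J {} x d' + 1 / 2 * (norm d')\<^sup>2"
  then have "(norm d)^2 \<le> 0" by (drule_tac x=0 in spec) (simp add: hfun_def)
  then show "d = 0" by simp
qed (simp add: hfun_def)

lemma vfun_min: assumes fin: "finite C" and ne: "C \<noteq> {}"
  shows "hfun J C x (vfun J C x) + (1/2)*(norm (vfun J C x))^2 \<le> hfun J C x d' + (1/2)*(norm d')^2"
proof -
  define f where "f = (\<lambda>d. hfun J C x d + (1/2) * (norm d)^2)"
  define M where "M = norm (J x) * Max (norm ` C)"
  obtain w0 where w0: "w0 \<in> C" using ne by blast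
  have M0: "M \<ge> 0" unfolding M_def using normW[OF fin w0] norm_ge_zero[of w0]
    by (intro mult_nonneg_nonneg) (auto intro: order_trans[OF norm_ge_zero])
  have lip: "\<bar>hfun J C x a - hfun J C x b\<bar> \<le> M * norm (a - b)" for a b
    using hfun_lip_d[OF fin ne, of J x a b] hfun_lip_d[OF fin ne, of J x b a] norm_minus_commute[of a b]
    unfolding M_def by (simp add: abs_le_iff)
  have ch: "continuous_on UNIV (hfun J C x)"
    unfolding continuous_on_iff
  proof (intro ballI allI impI)
    fix a and e :: real assume e: "e > 0"
    show "\<exists>d>0. \<forall>x'\<in>UNIV. dist x' a < d \<longrightarrow> dist (hfun J C x x') (hfun J C x a) < e"
    proof (intro exI[of _ "e / (M + 1)"] conjI ballI impI)
      show "e / (M+1) > 0" using e M0 by simp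
      fix x' assume "dist x' a < e / (M + 1)"
      then have "norm (x' - a) * (M + 1) < e" using M0 by (simp add: dist_norm field_simps)
      moreover have "M * norm (x' - a) \<le> norm (x' - a) * (M + 1)" by (simp add: algebra_simps)
      ultimately show "dist (hfun J C x x') (hfun J C x a) < e"
        using lip[of x' a] by (simp add: dist_real_def)
    qed
  qed
  have cf: "continuous_on UNIV f" unfolding f_def
    by (intro continuous_intros ch)
  obtain m where m: "m \<in> cball 0 (2*M)" "\<forall>y\<in>cball 0 (2*M). f m \<le> f y"
  proof -
    have "cball 0 (2*M) \<noteq> {}" using M0 by simp
    moreover have "continuous_on (cball 0 (2*M)) f" using cf continuous_on_subset by blast
    ultimately show ?thesis using continuous_attains_inf[of "cball 0 (2*M)" f] that compact_cball by blast
  qed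
  have f0: "f 0 = 0" unfolding f_def using hfun_zero[OF fin ne] by simp
  have fm: "f m \<le> 0" using m(2)[rule_format, of 0] f0 M0 by simp
  have glob: "f m \<le> f y" for y
  proof (cases "norm y \<le> 2*M")
    case True then show ?thesis using m(2) by simp
  next
    case False
    have "f y \<ge> - M * norm y + (1/2) * (norm y)^2"
      unfolding f_def M_def using hfun_lower[OF fin ne, of J x y] by simp
    moreover have "- M * norm y + (1/2) * (norm y)^2 = norm y * ((1/2) * norm y - M)"
      by (simp add: algebra_simps power2_eq_square)
    moreover have "norm y * ((1/2) * norm y - M) \<ge> 0" using False M0 by simp
    ultimately show ?thesis using fm by linarith
  qed
  have uniq: "d = m" if hd: "\<forall>d'. f d \<le> f d'" for d
  proof -
    have eq: "f d = f m" using hd glob by (meson antisym)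
    define z where "z = (1/2) *\<^sub>R (d + m)"
    have hz: "hfun J C x z \<le> (1/2) * (hfun J C x d + hfun J C x m)"
      using hfun_scale[OF fin ne, of "1/2" J x "d+m"] hfun_add[OF fin ne, of J x d m] unfolding z_def by simp
    have nz: "(norm z)^2 = (1/2) * (norm d)^2 + (1/2) * (norm m)^2 - (1/4) * (norm (d - m))^2"
      unfolding z_def power2_norm_eq_inner
      by (simp add: inner_add_left inner_add_right inner_diff_left inner_diff_right inner_commute algebra_simps)
    have "f z \<le> f m - (1/8) * (norm (d - m))^2"
      using hz eq unfolding f_def nz by (simp add: algebra_simps)
    moreover have "f m \<le> f z" using glob .
    ultimately have "(norm (d - m))^2 \<le> 0" by linarith
    then show ?thesis by simp
  qed
  have "vfun J C x = m" unfolding vfun_def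
    by (rule the_equality) (use glob uniq in \<open>auto simp: f_def\<close>)
  then show ?thesis using glob[of d'] unfolding f_def by simp
qed

lemma vfun_neg: assumes "finite C" "C \<noteq> {}" "vfun J C x \<noteq> 0"
  shows "hfun J C x (vfun J C x) < 0"
proof -
  have "(norm (vfun J C x))^2 > 0" using assms(3) by simp
  moreover have "hfun J C x (vfun J C x) + (1/2)*(norm (vfun J C x))^2 \<le> 0"
    using vfun_min[OF assms(1,2), of J x 0] hfun_zero[OF assms(1,2), of J x] by simp
  ultimately show ?thesis by linarith
qed

theorem mainTheorem2:
  fixes K C :: "(real^'m) set"
    and F :: "real^'n \<Rightarrow> real^'m"
    and J :: "real^'n \<Rightarrow> ((real^'n) \<Rightarrow>\<^sub>L (real^'m))"
    and \<rho> \<sigma> \<mu> L :: real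
    and e :: "real^'m"
    and x0 :: "real^'n"
    and x d :: "nat \<Rightarrow> real^'n"
    and \<alpha> :: "nat \<Rightarrow> real"
  assumes K_pointed: "pointed K" and K_closed: "closed K" and K_convex: "convex K"
    and K_cone: "cone K" and K_int: "interior K \<noteq> {}"
    and K_fg: "finitely_generated_cone K"
    and C_fin: "finite C" and C_0: "0 \<notin> C"
    and K_dual: "dual_cone K = cone hull (convex hull C)"
    and F_deriv: "\<And>y. (F has_derivative blinfun_apply (J y)) (at y)"
    and J_cont: "continuous_on UNIV J"
    and params: "0 < \<rho>" "\<rho> < \<sigma>" "\<sigma> < 1" "\<mu> > 2"
    and e_int: "e \<in> interior K" and e_bound: "\<forall>w\<in>C. inner w e \<le> 1"
    and A1: "\<exists>\<Lambda>. open \<Lambda> \<and> {y. cone_le K (F y) (F x0)} \<subseteq> \<Lambda> \<and>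
               (\<forall>y\<in>\<Lambda>. \<forall>z\<in>\<Lambda>. norm (J y - J z) \<le> L * norm (y - z))"
    and A2: "\<forall>D :: nat \<Rightarrow> real^'m.
               (\<forall>k. D k \<in> F ` {y. cone_le K (F y) (F x0)}) \<and> (\<forall>k. cone_le K (D (Suc k)) (D k))
               \<longrightarrow> (\<exists>D0. \<forall>k. cone_le K D0 (D k))"
    and x_0: "x 0 = x0"
    and infinite_seq: "\<forall>k. vfun J C (x k) \<noteq> 0"
    and d_0: "d 0 = vfun J C (x 0)"
    and d_Suc: "\<forall>k. d (Suc k) = vfun J C (x (Suc k)) + betak J C \<mu> (x (Suc k)) (x k) (d k) *\<^sub>R d k"
    and x_Suc: "\<forall>k. x (Suc k) = x k + \<alpha> k *\<^sub>R d k"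
    and \<alpha>_pos: "\<forall>k. \<alpha> k > 0"
    and wolfe1: "\<forall>k. cone_le K (F (x k + \<alpha> k *\<^sub>R d k)) (F (x k) + (\<rho> * \<alpha> k * hfun J C (x k) (d k)) *\<^sub>R e)"
    and wolfe2: "\<forall>k. hfun J C (x k + \<alpha> k *\<^sub>R d k) (d k) \<ge> \<sigma> * hfun J C (x k) (d k)"
  shows "summable (\<lambda>k. (hfun J C (x k) (d k))^2 / (norm (d k))^2)"
proof -
  have Cne: "C \<noteq> {}" using infinite_seq vfun_empty by metis
  have hv: "hfun J C (x k) (vfun J C (x k)) < 0" for k
    using vfun_neg[OF C_fin Cne] infinite_seq by blast
  have desc: "hfun J C (x k) (d k) < 0" for k
  proof (cases k)
    case 0 then show ?thesis using hv[of 0] d_0 by simp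
  next
    case (Suc j)
    define a where "a = hfun J C (x (Suc j)) (vfun J C (x (Suc j)))"
    define p where "p = hfun J C (x j) (vfun J C (x (Suc j)))"
    define q where "q = hfun J C (x (Suc j)) (d j)"
    define r where "r = hfun J C (x j) (vfun J C (x j))"
    define \<beta> where "\<beta> = betak J C \<mu> (x (Suc j)) (x j) (d j)"
    have a0: "a < 0" unfolding a_def using hv .
    have r0: "r < 0" unfolding r_def using hv .
    have beta: "\<beta> = (- a * (\<bar>p\<bar> + p)) / max (\<mu> * \<bar>q * p\<bar>) (- \<mu> * r * \<bar>p\<bar>)"
      unfolding \<beta>_def betak_def Let_def a_def p_def q_def r_def by simp
    have bb: "\<beta> \<ge> 0 \<and> \<beta> * q \<le> (2/\<mu>) * (- a)"
    proof (cases "p \<le> 0")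
      case True
      then have "\<beta> = 0" unfolding beta by simp
      then show ?thesis using a0 params by (simp add: divide_nonpos_pos)
    next
      case False
      then have pp: "p > 0" by simp
      define den where "den = max (\<mu> * \<bar>q * p\<bar>) (- \<mu> * r * \<bar>p\<bar>)"
      have den1: "den \<ge> - \<mu> * r * p" unfolding den_def using pp by simp
      have den2: "den \<ge> \<mu> * \<bar>q\<bar> * p" unfolding den_def using pp by (simp add: abs_mult)
      have "\<mu> * r < 0" using params r0 by (simp add: mult_pos_neg)
      then have "\<mu> * r * p < 0" using pp by (simp add: mult_neg_pos)
      then have "- \<mu> * r * p > 0" by simp
      then have denp: "den > 0" using den1 by linarith
      have bet: "\<beta> = (-2 * a * p) / den" unfolding beta den_def using pp by simp
      have "a * p < 0" using a0 pp by (simp add: mult_neg_pos)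
      then have b0: "\<beta> \<ge> 0" unfolding bet using denp by (simp add: divide_nonpos_pos)
      have "\<beta> * q \<le> \<beta> * \<bar>q\<bar>" using b0 by (simp add: mult_left_mono)
      also have "\<beta> * \<bar>q\<bar> \<le> (2/\<mu>) * (- a)"
      proof (cases "q = 0")
        case True then show ?thesis using a0 params by (simp add: divide_nonpos_pos)
      next
        case False
        then have qp: "\<mu> * \<bar>q\<bar> * p > 0" using params pp by simp
        have "\<beta> * \<bar>q\<bar> = (-2 * a * p * \<bar>q\<bar>) / den" unfolding bet by simp
        also have "\<dots> \<le> (-2 * a * p * \<bar>q\<bar>) / (\<mu> * \<bar>q\<bar> * p)"
          by (rule divide_left_mono) (use den2 qp a0 pp in \<open>auto simp: mult_nonpos_nonneg\<close>)
        also have "\<dots> = (2/\<mu>) * (- a)" using False pp params by (simp add: field_simps)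
        finally show ?thesis .
      qed
      finally show ?thesis using b0 by simp
    qed
    have dS: "d k = vfun J C (x (Suc j)) + \<beta> *\<^sub>R d j" using d_Suc Suc \<beta>_def by simp
    have "hfun J C (x k) (d k) \<le> a + hfun J C (x (Suc j)) (\<beta> *\<^sub>R d j)"
      using hfun_add[OF C_fin Cne, of J "x (Suc j)" "vfun J C (x (Suc j))" "\<beta> *\<^sub>R d j"] dS Suc a_def by simp
    also have "hfun J C (x (Suc j)) (\<beta> *\<^sub>R d j) \<le> \<beta> * q"
      unfolding q_def using hfun_scale[OF C_fin Cne] bb by blast
    finally have "hfun J C (x k) (d k) \<le> a + (2/\<mu>) * (- a)" using bb by linarith
    also have "\<dots> = a * (1 - 2/\<mu>)" by (simp add: algebra_simps)
    also have "\<dots> < 0" using a0 params by (simp add: mult_neg_pos)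
    finally show ?thesis .
  qed
  have Kadd: "u \<in> K \<Longrightarrow> v \<in> K \<Longrightarrow> u + v \<in> K" for u v
    using K_convex K_cone convex_cone by blast
  have Kscale: "u \<in> K \<Longrightarrow> c \<ge> 0 \<Longrightarrow> c *\<^sub>R u \<in> K" for u c
    using K_cone unfolding cone_def by blast
  have eK: "e \<in> K" using e_int interior_subset by blast
  have Cd: "w \<in> C \<Longrightarrow> u \<in> K \<Longrightarrow> 0 \<le> inner w u" for w u
  proof -
    assume "w \<in> C" "u \<in> K"
    then have "w \<in> cone hull (convex hull C)" by (meson hull_inc subsetD hull_subset)
    then have "w \<in> dual_cone K" using K_dual by simp
    then show ?thesis using \<open>u \<in> K\<close> unfolding dual_cone_def by simp
  qed
  have W1: "F (x k) + (\<rho> * \<alpha> k * hfun J C (x k) (d k)) *\<^sub>R e - F (x (Suc k)) \<in> K" for k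
    using wolfe1 x_Suc unfolding cone_le_def by simp
  have step: "F (x k) - F (x (Suc k)) \<in> K" for k
  proof -
    have "(- (\<rho> * \<alpha> k * hfun J C (x k) (d k))) *\<^sub>R e \<in> K"
    proof (intro Kscale[OF eK])
      have "\<rho> * \<alpha> k > 0" using params \<alpha>_pos by simp
      then have "\<rho> * \<alpha> k * hfun J C (x k) (d k) < 0" using desc[of k] by (simp add: mult_pos_neg)
      then show "0 \<le> - (\<rho> * \<alpha> k * hfun J C (x k) (d k))" by simp
    qed
    from Kadd[OF W1[of k] this] show ?thesis by (simp add: algebra_simps)
  qed
  have inL: "F x0 - F (x k) \<in> K" for k
  proof (induction k)
    case 0 then show ?case using x_0 eK Kscale[of e 0] by simp
  next
    case (Suc k) from Kadd[OF Suc step[of k]] show ?case by simp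
  qed
  obtain D0 where D0: "\<And>k. F (x k) - D0 \<in> K"
  proof -
    have "\<exists>D0. \<forall>k. cone_le K D0 (F (x k))"
      using A2[rule_format, of "\<lambda>k. F (x k)"] inL step unfolding cone_le_def by blast
    then show ?thesis using that unfolding cone_le_def by blast
  qed
  obtain w where w: "w \<in> C" "inner w e > 0"
  proof -
    obtain w where wC: "w \<in> C" using Cne by blast
    have wn: "w \<noteq> 0" using wC C_0 by blast
    obtain \<epsilon> where \<epsilon>: "\<epsilon> > 0" "ball e \<epsilon> \<subseteq> K" using e_int mem_interior by blast
    define u where "u = e - (\<epsilon> / 2 / norm w) *\<^sub>R w"
    have "dist e u = \<epsilon> / 2" unfolding u_def dist_norm using wn \<epsilon> by simp
    then have "u \<in> K" using \<epsilon> by auto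
    then have "0 \<le> inner w u" using Cd wC by blast
    also have "inner w u = inner w e - \<epsilon> / 2 * norm w"
      unfolding u_def using wn by (simp add: inner_diff_right power2_norm_eq_inner[symmetric] power2_eq_square)
    finally have "inner w e \<ge> \<epsilon> / 2 * norm w" by simp
    moreover have "\<epsilon> / 2 * norm w > 0" using \<epsilon> wn by simp
    ultimately show ?thesis using that wC by simp
  qed
  define g where "g k = inner w (F (x k))" for k
  define a where "a k = \<alpha> k * (- hfun J C (x k) (d k))" for k
  have a0: "a k \<ge> 0" for k unfolding a_def using \<alpha>_pos[rule_format, of k] desc[of k] by (simp add: mult_pos_neg less_imp_le)
  have gstep: "g (Suc k) \<le> g k - \<rho> * inner w e * a k" for k
  proof -
    have "0 \<le> inner w (F (x k) + (\<rho> * \<alpha> k * hfun J C (x k) (d k)) *\<^sub>R e - F (x (Suc k)))"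
      using Cd[OF w(1) W1[of k]] .
    then show ?thesis unfolding g_def a_def by (simp add: inner_diff_right inner_add_right algebra_simps)
  qed
  have glow: "g k \<ge> inner w D0" for k
    using Cd[OF w(1) D0[of k]] unfolding g_def by (simp add: inner_diff_right)
  have psum: "\<rho> * inner w e * (\<Sum>i<n. a i) \<le> g 0 - g n" for n
  proof (induction n)
    case 0 then show ?case by simp
  next
    case (Suc n) then show ?case using gstep[of n] by (simp add: algebra_simps)
  qed
  have pos: "\<rho> * inner w e > 0" using params w by simp
  have bnd: "(\<Sum>i<n. a i) \<le> (g 0 - inner w D0) / (\<rho> * inner w e)" for n
  proof -
    have "\<rho> * inner w e * (\<Sum>i<n. a i) \<le> g 0 - inner w D0" using psum[of n] glow[of n] by linarith
    then show ?thesis using pos by (simp add: field_simps mult.commute)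
  qed
  have suma: "summable a" by (rule summableI_nonneg_bounded[OF a0 bnd])
  obtain \<Lambda> where \<Lambda>: "{y. cone_le K (F y) (F x0)} \<subseteq> \<Lambda>"
      "\<forall>y\<in>\<Lambda>. \<forall>z\<in>\<Lambda>. norm (J y - J z) \<le> L * norm (y - z)"
    using A1 by blast
  have xL: "x k \<in> \<Lambda>" for k using \<Lambda>(1) inL unfolding cone_le_def by blast
  define W where "W = Max (norm ` C)"
  have W0: "W \<ge> 0" unfolding W_def using Cne C_fin normW[OF C_fin] norm_ge_zero
    by (meson all_not_in_conv order_trans)
  have tb: "(hfun J C (x k) (d k))^2 / (norm (d k))^2 \<le> (L * W / (1 - \<sigma>)) * a k" for k
  proof -
    let ?h = "hfun J C (x k) (d k)"
    have hn: "?h < 0" using desc .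
    have dn: "d k \<noteq> 0" proof
      assume "d k = 0" then show False using hn hfun_zero[OF C_fin Cne, of J "x k"] by simp
    qed
    have "norm (J (x (Suc k)) - J (x k)) \<le> L * norm (x (Suc k) - x k)" using \<Lambda>(2) xL by blast
    also have "norm (x (Suc k) - x k) = \<alpha> k * norm (d k)" using x_Suc \<alpha>_pos by (simp add: less_imp_le)
    finally have jl: "norm (J (x (Suc k)) - J (x k)) \<le> L * (\<alpha> k * norm (d k))" .
    have "hfun J C (x (Suc k)) (d k) \<le> ?h + norm (J (x (Suc k)) - J (x k)) * W * norm (d k)"
      unfolding W_def by (rule hfun_lip_x[OF C_fin Cne])
    also have "norm (J (x (Suc k)) - J (x k)) * W * norm (d k) \<le> L * (\<alpha> k * norm (d k)) * W * norm (d k)"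
      using jl W0 by (intro mult_right_mono) auto
    finally have "\<sigma> * ?h \<le> ?h + L * W * \<alpha> k * (norm (d k))^2"
      using wolfe2[rule_format, of k] x_Suc by (simp add: power2_eq_square algebra_simps)
    then have i1: "(1 - \<sigma>) * (- ?h) \<le> L * W * \<alpha> k * (norm (d k))^2" by (simp add: algebra_simps)
    have "(1 - \<sigma>) * ?h^2 = ((1 - \<sigma>) * (- ?h)) * (- ?h)" by (simp add: power2_eq_square)
    also have "\<dots> \<le> (L * W * \<alpha> k * (norm (d k))^2) * (- ?h)"
      using i1 hn by (intro mult_right_mono) auto
    finally have i2: "(1 - \<sigma>) * ?h^2 \<le> (L * W * \<alpha> k * (- ?h)) * (norm (d k))^2" by (simp add: algebra_simps)
    have nd: "(norm (d k))^2 > 0" using dn by simp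
    have s1: "1 - \<sigma> > 0" using params by simp
    show ?thesis unfolding a_def using i2 nd s1
      by (simp add: field_simps)
  qed
  show ?thesis
  proof (rule summable_comparison_test)
    show "\<exists>N. \<forall>n\<ge>N. norm ((hfun J C (x n) (d n))^2 / (norm (d n))^2) \<le> (L * W / (1 - \<sigma>)) * a n"
      using tb by auto
    show "summable (\<lambda>n. (L * W / (1 - \<sigma>)) * a n)" using suma by (rule summable_mult)
  qed
qed

end
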